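(* Let $n\ge1$, let $v=(v_1,\ldots,v_n)\in\mathbb{R}^n$ and $\lambda=(\lambda_1,\ldots,\lambda_n)\in\mathbb{R}^n$ satisfy $\lambda(v):=\sum_{i=1}^n\lambda_iv_i>0$, and put $\|\lambda\|_\infty=\max_i|\lambda_i|$, $\|v\|_\infty=\max_i|v_i|$. Let $H\subseteq Q_n$ be any set of more than $2^{n-1}$ vertices. Then there exists $\beta\in H$ such that \[ \sqrt{\lambda(v)}\ \le\ \|\lambda\|_\infty\cdot\#\{\gamma\in H:\gamma\to\beta\}+\|v\|_\infty\cdot\#\{\gamma\in H:\beta\to\gamma\}. \]
   Context: $Q_n=\{0,1\}^n$ is the boolean cube, viewed as a graph in which two vertices are adjacent iff they differ in exactly one coordinate. For $\gamma,\beta\in Q_n$ write $\gamma\to\beta$ if $\gamma$ and $\beta$ differ in exactly one coordinate $k$ and $\gamma_k=0$, $\beta_k=1$ (i.e. $\beta$ is obtained from $\gamma$ by changing a single $0$ to $1$). *)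

theory Defs
  imports Complex_Main
begin

definition cube :: "nat \<Rightarrow> bool list set" where
  "cube n = {xs. length xs = n}"

text \<open>gamma -> beta: beta arises from gamma by changing a single 0 (False) to 1 (True).\<close>
definition up_edge :: "bool list \<Rightarrow> bool list \<Rightarrow> bool" where
  "up_edge g b \<longleftrightarrow> length g = length b \<and>
     (\<exists>k < length g. \<not> g ! k \<and> b ! k \<and> (\<forall>j < length g. j \<noteq> k \<longrightarrow> g ! j = b ! j))"

definition sup_norm :: "nat \<Rightarrow> (nat \<Rightarrow> real) \<Rightarrow> real" where
  "sup_norm n x = Max ((\<lambda>i. \<bar>x i\<bar>) ` {..<n})"

end

theory Submission
  imports Defs
begin


lemma underdet:
  fixes a :: "'c \<Rightarrow> 'u \<Rightarrow> real"
  assumes "finite C" "finite U" "card C < card U"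
  shows "\<exists>y. (\<exists>u\<in>U. y u \<noteq> 0) \<and> (\<forall>c\<in>C. (\<Sum>u\<in>U. a c u * y u) = 0)"
  using assms
proof (induction C arbitrary: U a rule: finite_induct)
  case empty
  then obtain u where "u \<in> U" by fastforce
  then show ?case by (rule_tac x="\<lambda>x. if x = u then 1 else 0" in exI) auto
next
  case (insert c C)
  have cC: "card (insert c C) = card C + 1" using insert by simp
  show ?case
  proof (cases "\<forall>u\<in>U. a c u = 0")
    case True
    from insert.IH[of U a] insert.prems cC obtain y where
      y: "(\<exists>u\<in>U. y u \<noteq> 0)" "(\<forall>d\<in>C. (\<Sum>u\<in>U. a d u * y u) = 0)" by auto
    show ?thesis using y True by (rule_tac x=y in exI) auto
  next
    case False
    then obtain u0 where u0: "u0 \<in> U" "a c u0 \<noteq> 0" by auto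
    define U' where "U' = U - {u0}"
    have cU': "card U' = card U - 1" using u0 insert.prems unfolding U'_def by simp
    have fU0: "finite U'" using insert.prems unfolding U'_def by simp
    define a' where "a' d u = a d u - a d u0 * a c u / a c u0" for d u
    from insert.IH[of U' a'] insert.prems cC cU' obtain y' where
      y': "(\<exists>u\<in>U'. y' u \<noteq> 0)" "(\<forall>d\<in>C. (\<Sum>u\<in>U'. a' d u * y' u) = 0)"
      using fU0 by force
    have fU': "finite U'" using insert.prems unfolding U'_def by simp
    define S where "S = (\<Sum>u\<in>U'. a c u * y' u)"
    define y where "y = y'(u0 := - S / a c u0)"
    have fU': "finite U'" using insert.prems unfolding U'_def by simp
    have split: "(\<Sum>u\<in>U. a d u * y u) = a d u0 * (- S / a c u0) + (\<Sum>u\<in>U'. a d u * y' u)" for d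
    proof -
      have "(\<Sum>u\<in>U. a d u * y u) = a d u0 * y u0 + (\<Sum>u\<in>U'. a d u * y u)"
        using u0 insert.prems unfolding U'_def by (simp add: sum.remove)
      also have "(\<Sum>u\<in>U'. a d u * y u) = (\<Sum>u\<in>U'. a d u * y' u)"
        by (rule sum.cong) (auto simp: y_def U'_def)
      finally show ?thesis by (simp add: y_def)
    qed
    have "\<exists>u\<in>U. y u \<noteq> 0" using y' by (auto simp: y_def U'_def)
    moreover have "\<forall>d\<in>insert c C. (\<Sum>u\<in>U. a d u * y u) = 0"
    proof
      fix d assume d: "d \<in> insert c C"
      show "(\<Sum>u\<in>U. a d u * y u) = 0"
      proof (cases "d = c")
        case True then show ?thesis using split[of c] u0 by (simp add: S_def)
      next
        case False
        then have dC: "d \<in> C" using d by auto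
        have "0 = (\<Sum>u\<in>U'. a' d u * y' u)" using y' dC by auto
        also have "\<dots> = (\<Sum>u\<in>U'. a d u * y' u) - a d u0 / a c u0 * S"
          unfolding a'_def S_def by (simp add: algebra_simps sum_subtractf sum_distrib_left)
        finally show ?thesis using split[of d] by (simp add: algebra_simps)
      qed
    qed
    ultimately show ?thesis by blast
  qed
qed



definition flip :: "bool list \<Rightarrow> nat \<Rightarrow> bool list" where
  "flip b k = b[k := \<not> b ! k]"
definition sg :: "bool list \<Rightarrow> nat \<Rightarrow> real" where
  "sg b k = (-1) ^ card {j. j < k \<and> b ! j}"
definition cf :: "(nat \<Rightarrow> real) \<Rightarrow> (nat \<Rightarrow> real) \<Rightarrow> bool list \<Rightarrow> nat \<Rightarrow> real" where
  "cf lam v b k = sg b k * (if b ! k then lam k else v k)"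
definition Mop :: "nat \<Rightarrow> (nat \<Rightarrow> real) \<Rightarrow> (nat \<Rightarrow> real) \<Rightarrow> (bool list \<Rightarrow> real) \<Rightarrow> bool list \<Rightarrow> real" where
  "Mop n lam v x b = (\<Sum>k<n. cf lam v b k * x (flip b k))"

lemma length_flip[simp]: "length (flip b k) = length b"
  by (simp add: flip_def)

lemma flip_nth: "k < length b \<Longrightarrow> flip b k ! j = (if j = k then \<not> b ! k else b ! j)"
  by (simp add: flip_def nth_list_update)

lemma flip_nth_neq[simp]: "j \<noteq> k \<Longrightarrow> flip b k ! j = b ! j"
  by (simp add: flip_def)

lemma flip_nth_eq[simp]: "k < length b \<Longrightarrow> flip b k ! k = (\<not> b ! k)"
  by (simp add: flip_def)

lemma flip_flip[simp]: "k < length b \<Longrightarrow> flip (flip b k) k = b"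
  by (rule nth_equalityI) (auto simp: flip_nth)

lemma flip_comm: "k < length b \<Longrightarrow> l < length b \<Longrightarrow> flip (flip b k) l = flip (flip b l) k"
  by (rule nth_equalityI) (auto simp: flip_nth)

lemma sg_sq: "sg b k * sg b k = 1"
  unfolding sg_def by (simp add: power_mult_distrib[symmetric])

lemma sg_flip_ge: "k \<le> l \<Longrightarrow> sg (flip b l) k = sg b k"
proof -
  assume "k \<le> l"
  then have "{j. j < k \<and> flip b l ! j} = {j. j < k \<and> b ! j}" by auto
  then show ?thesis by (simp add: sg_def)
qed

lemma sg_flip_less: assumes "k < l" "k < length b" shows "sg (flip b k) l = - sg b l"
proof -
  define S where "S = {j. j < l \<and> b ! j}"
  have fS: "finite S" unfolding S_def by simp
  show ?thesis
  proof (cases "b ! k")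
    case True
    then have "{j. j < l \<and> flip b k ! j} = S - {k}" using assms by (auto simp: S_def flip_nth)
    moreover have "k \<in> S" using True assms by (simp add: S_def)
    ultimately have "card {j. j < l \<and> flip b k ! j} + 1 = card S" using fS
      by (simp add: card_Diff_singleton) (metis Suc_pred card_gt_0_iff empty_iff)
    then show ?thesis unfolding sg_def S_def[symmetric] by (metis add.commute power_Suc mult_minus1 minus_minus Suc_eq_plus1)
  next
    case False
    then have "{j. j < l \<and> flip b k ! j} = insert k S" using assms by (auto simp: S_def flip_nth)
    moreover have "k \<notin> S" using False assms by (simp add: S_def)
    ultimately have "card {j. j < l \<and> flip b k ! j} = card S + 1" using fS by simp
    then show ?thesis unfolding sg_def S_def[symmetric] by simp
  qed
qed

lemma antisym_sum:
  fixes g :: "nat \<Rightarrow> nat \<Rightarrow> real"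
  assumes "\<And>k l. k < n \<Longrightarrow> l < n \<Longrightarrow> g k l = - g l k"
  shows "(\<Sum>k<n. \<Sum>l<n. g k l) = 0"
proof -
  have "(\<Sum>k<n. \<Sum>l<n. g k l) = (\<Sum>l<n. \<Sum>k<n. g k l)" by (rule sum.swap)
  also have "\<dots> = (\<Sum>l<n. \<Sum>k<n. - g l k)" by (intro sum.cong refl) (metis assms lessThan_iff)
  also have "\<dots> = - (\<Sum>l<n. \<Sum>k<n. g l k)" by (simp add: sum_negf)
  finally show ?thesis by simp
qed

lemma Mop_sq:
  assumes "length b = n"
  shows "Mop n lam v (Mop n lam v x) b = (\<Sum>i<n. lam i * v i) * x b"
proof -
  define f where "f k l = cf lam v b k * cf lam v (flip b k) l * x (flip (flip b k) l)" for k l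
  define g where "g k l = (if k = l then 0 else f k l)" for k l
  have LHS: "Mop n lam v (Mop n lam v x) b = (\<Sum>k<n. \<Sum>l<n. f k l)"
    unfolding Mop_def f_def by (simp add: sum_distrib_left mult.assoc)
  have diag: "f k k = lam k * v k * x b" if "k < n" for k
  proof -
    have "k < length b" using that assms by simp
    then have "flip (flip b k) k = b" "sg (flip b k) k = sg b k" "flip b k ! k = (\<not> b ! k)"
      by (auto simp: sg_flip_ge)
    then show ?thesis using sg_sq[of b k] unfolding f_def cf_def
      by (cases "b ! k") (simp_all add: algebra_simps)
  qed
  have anti_lt: "f k l = - f l k" if "k < l" "l < n" for k l
  proof -
    have "flip (flip b k) l = flip (flip b l) k" using that assms by (simp add: flip_comm)
    moreover have "sg (flip b k) l = - sg b l" using that assms by (simp add: sg_flip_less)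
    moreover have "sg (flip b l) k = sg b k" using that by (simp add: sg_flip_ge)
    moreover have "flip b k ! l = b ! l" "flip b l ! k = b ! k" using that by auto
    ultimately show ?thesis by (simp add: f_def cf_def algebra_simps)
  qed
  have anti: "g k l = - g l k" if "k < n" "l < n" for k l
  proof (cases k l rule: linorder_cases)
    case less then show ?thesis using anti_lt[of k l] that unfolding g_def by simp
  next
    case equal then show ?thesis unfolding g_def by simp
  next
    case greater
    then have "f l k = - f k l" using anti_lt[of l k] that by simp
    then show ?thesis using greater unfolding g_def by simp
  qed
  have row: "(\<Sum>l<n. f k l) = f k k + (\<Sum>l<n. g k l)" if "k < n" for k
  proof -
    have "(\<Sum>l<n. f k l) = (\<Sum>l<n. (if l = k then f k k else 0) + g k l)"
      by (rule sum.cong) (auto simp: g_def)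
    also have "\<dots> = f k k + (\<Sum>l<n. g k l)" using that by (simp add: sum.distrib)
    finally show ?thesis .
  qed
  have "(\<Sum>k<n. \<Sum>l<n. f k l) = (\<Sum>k<n. f k k) + (\<Sum>k<n. \<Sum>l<n. g k l)"
    by (simp add: row sum.distrib)
  also have "(\<Sum>k<n. \<Sum>l<n. g k l) = 0" by (rule antisym_sum) (erule (1) anti)
  also have "(\<Sum>k<n. f k k) = (\<Sum>k<n. lam k * v k * x b)" by (rule sum.cong) (auto simp: diag)
  finally show ?thesis by (simp add: LHS sum_distrib_right)
qed

lemma Mop_lin: "Mop n lam v (\<lambda>x. f x + t * g x) b = Mop n lam v f b + t * Mop n lam v g b"
  unfolding Mop_def by (simp add: algebra_simps sum.distrib sum_distrib_left)


lemma sum_ifs_card: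
  fixes L V :: real and n :: nat
  shows "(\<Sum>k<n. if P k then (if Q k then L else V) else 0)
     = L * real (card {k. k < n \<and> P k \<and> Q k}) + V * real (card {k. k < n \<and> P k \<and> \<not> Q k})"
proof -
  have "(\<Sum>k<n. if P k then (if Q k then L else V) else 0)
      = (\<Sum>k<n. (if P k \<and> Q k then L else 0) + (if P k \<and> \<not> Q k then V else 0))"
    by (rule sum.cong) auto
  also have "\<dots> = (\<Sum>k<n. if P k \<and> Q k then L else 0) + (\<Sum>k<n. if P k \<and> \<not> Q k then V else 0)"
    by (simp add: sum.distrib)
  also have "(\<Sum>k<n. if P k \<and> Q k then L else 0) = (\<Sum>k\<in>{k\<in>{..<n}. P k \<and> Q k}. L)"
    by (subst sum.inter_filter) auto
  also have "{k\<in>{..<n}. P k \<and> Q k} = {k. k < n \<and> P k \<and> Q k}" by auto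
  also have "(\<Sum>k<n. if P k \<and> \<not> Q k then V else 0) = (\<Sum>k\<in>{k\<in>{..<n}. P k \<and> \<not> Q k}. V)"
    by (subst sum.inter_filter) auto
  also have "{k\<in>{..<n}. P k \<and> \<not> Q k} = {k. k < n \<and> P k \<and> \<not> Q k}" by auto
  finally show ?thesis by (simp add: mult.commute)
qed

lemma card_up_in:
  assumes "length b = n"
  shows "card {k. k < n \<and> flip b k \<in> H \<and> b ! k} = card {g\<in>H. up_edge g b}"
proof -
  have "bij_betw (flip b) {k. k < n \<and> flip b k \<in> H \<and> b ! k} {g\<in>H. up_edge g b}"
  proof (rule bij_betwI')
    fix x y assume "x \<in> {k. k < n \<and> flip b k \<in> H \<and> b ! k}" "y \<in> {k. k < n \<and> flip b k \<in> H \<and> b ! k}"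
    then show "(flip b x = flip b y) = (x = y)" using assms
      by (metis (no_types, lifting) flip_nth mem_Collect_eq)
  next
    fix x assume x: "x \<in> {k. k < n \<and> flip b k \<in> H \<and> b ! k}"
    then show "flip b x \<in> {g\<in>H. up_edge g b}" using assms
      unfolding up_edge_def by (auto simp: flip_nth intro!: exI[of _ x])
  next
    fix g assume "g \<in> {g\<in>H. up_edge g b}"
    then obtain k where k: "g \<in> H" "length g = length b" "k < length g" "\<not> g ! k" "b ! k"
      "\<forall>j<length g. j \<noteq> k \<longrightarrow> g ! j = b ! j" unfolding up_edge_def by auto
    then have "g = flip b k" by (intro nth_equalityI) (auto simp: flip_nth)
    then show "\<exists>x\<in>{k. k < n \<and> flip b k \<in> H \<and> b ! k}. g = flip b x" using k assms by auto
  qed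
  then show ?thesis by (rule bij_betw_same_card)
qed

lemma card_down_in:
  assumes "length b = n"
  shows "card {k. k < n \<and> flip b k \<in> H \<and> \<not> b ! k} = card {g\<in>H. up_edge b g}"
proof -
  have "bij_betw (flip b) {k. k < n \<and> flip b k \<in> H \<and> \<not> b ! k} {g\<in>H. up_edge b g}"
  proof (rule bij_betwI')
    fix x y assume "x \<in> {k. k < n \<and> flip b k \<in> H \<and> \<not> b ! k}" "y \<in> {k. k < n \<and> flip b k \<in> H \<and> \<not> b ! k}"
    then show "(flip b x = flip b y) = (x = y)" using assms
      by (metis (no_types, lifting) flip_nth mem_Collect_eq)
  next
    fix x assume x: "x \<in> {k. k < n \<and> flip b k \<in> H \<and> \<not> b ! k}"
    then show "flip b x \<in> {g\<in>H. up_edge b g}" using assms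
      unfolding up_edge_def by (auto simp: flip_nth intro!: exI[of _ x])
  next
    fix g assume "g \<in> {g\<in>H. up_edge b g}"
    then obtain k where k: "g \<in> H" "length b = length g" "k < length b" "\<not> b ! k" "g ! k"
      "\<forall>j<length b. j \<noteq> k \<longrightarrow> b ! j = g ! j" unfolding up_edge_def by auto
    then have "g = flip b k" by (intro nth_equalityI) (auto simp: flip_nth)
    then show "\<exists>x\<in>{k. k < n \<and> flip b k \<in> H \<and> \<not> b ! k}. g = flip b x" using k assms by auto
  qed
  then show ?thesis by (rule bij_betw_same_card)
qed

lemma sup_norm_ge: "k < n \<Longrightarrow> \<bar>x k\<bar> \<le> sup_norm n x"
  unfolding sup_norm_def by (rule Max_ge) auto

lemma cube_eq: "cube n = {xs. set xs \<subseteq> (UNIV::bool set) \<and> length xs = n}"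
  by (auto simp: cube_def)

lemma cube_finite: "finite (cube n)"
  unfolding cube_eq by (rule finite_lists_length_eq) simp

lemma cube_card: "card (cube n) = 2 ^ n"
  unfolding cube_eq by (subst card_lists_length_eq) simp_all

lemma half_card:
  assumes "j < n"
  shows "card {x\<in>cube n. \<not> x ! j} = 2 ^ (n - 1)"
proof -
  let ?B = "{x\<in>cube n. \<not> x ! j}" and ?T = "{x\<in>cube n. x ! j}"
  have "bij_betw (\<lambda>x. flip x j) ?B ?T"
  proof (rule bij_betwI')
    fix x y assume "x \<in> ?B" "y \<in> ?B"
    then have lx: "length x = n" "length y = n" by (auto simp: cube_def)
    show "(flip x j = flip y j) = (x = y)"
    proof
      assume "flip x j = flip y j"
      then have "flip (flip x j) j = flip (flip y j) j" by simp
      then show "x = y" using lx assms by simp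
    qed simp
  next
    fix x assume "x \<in> ?B" then show "flip x j \<in> ?T" using assms by (auto simp: cube_def)
  next
    fix y assume "y \<in> ?T" then show "\<exists>x\<in>?B. y = flip x j" using assms
      by (intro bexI[of _ "flip y j"]) (auto simp: cube_def)
  qed
  then have "card ?B = card ?T" by (rule bij_betw_same_card)
  moreover have "card ?B + card ?T = card (cube n)"
    by (subst card_Un_disjoint[symmetric]) (auto intro: finite_subset[OF _ cube_finite] intro!: arg_cong[where f=card])
  moreover have "(2::nat) ^ n = 2 * 2 ^ (n - 1)" using assms by (cases n) auto
  ultimately show ?thesis by (simp add: cube_card)
qed

theorem mainTheorem2:
  fixes n :: nat and v lam :: "nat \<Rightarrow> real" and H :: "bool list set"
  assumes "n \<ge> 1"
    and "(\<Sum>i<n. lam i * v i) > 0"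
    and "H \<subseteq> cube n"
    and "card H > 2 ^ (n - 1)"
  shows "\<exists>\<beta>\<in>H. sqrt (\<Sum>i<n. lam i * v i)
           \<le> sup_norm n lam * real (card {\<gamma>\<in>H. up_edge \<gamma> \<beta>})
             + sup_norm n v * real (card {\<gamma>\<in>H. up_edge \<beta> \<gamma>})"
proof -
  define s where "s = (\<Sum>i<n. lam i * v i)"
  define t where "t = sqrt s"
  have s0: "s > 0" using assms(2) s_def by simp
  have t0: "t > 0" and tt: "t * t = s" using s0 by (auto simp: t_def)
  obtain j where j: "j < n" "lam j \<noteq> 0"
  proof (rule ccontr)
    assume "\<not> thesis"
    then have "\<forall>j<n. lam j = 0" using that by blast
    then have "s = 0" unfolding s_def by simp
    then show False using s0 by simp
  qed
  define B where "B = {x\<in>cube n. \<not> x ! j}"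
  define C where "C = cube n - H"
  define M where "M = Mop n lam v"
  define a where "a \<beta> \<gamma> = (\<Sum>k<n. if flip \<beta> k = \<gamma> then cf lam v \<beta> k else 0) + (if \<gamma> = \<beta> then t else 0)" for \<beta> \<gamma>
  have fin: "finite (cube n)" by (rule cube_finite)
  have fH: "finite H" using assms(3) fin by (rule finite_subset)
  have cB: "card B = 2 ^ (n - 1)" using half_card[OF j(1)] B_def by simp
  have cC: "card C = 2 ^ n - card H" unfolding C_def using assms(3) fH by (simp add: card_Diff_subset cube_card)
  have "card H \<le> 2 ^ n" using card_mono[OF fin assms(3)] by (simp add: cube_card)
  moreover have "(2::nat) ^ n = 2 * 2 ^ (n - 1)" using assms(1) by (cases n) auto
  ultimately have "card C < card B" using cB cC assms(4) by linarith
  then obtain y where y: "\<exists>u\<in>B. y u \<noteq> 0" "\<forall>c\<in>C. (\<Sum>u\<in>B. a c u * y u) = 0"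
    using underdet[of C B a] fin unfolding B_def C_def by auto
  define y0 where "y0 \<gamma> = (if \<gamma> \<in> B then y \<gamma> else 0)" for \<gamma>
  define z where "z \<beta> = M y0 \<beta> + t * y0 \<beta>" for \<beta>
  have fB: "finite B" using fin B_def by simp
  have zsum: "z \<beta> = (\<Sum>u\<in>B. a \<beta> u * y u)" for \<beta>
  proof -
    have "(\<Sum>u\<in>B. a \<beta> u * y u) = (\<Sum>u\<in>B. (\<Sum>k<n. if flip \<beta> k = u then cf lam v \<beta> k * y u else 0) + (if u = \<beta> then t * y u else 0))"
      unfolding a_def distrib_right sum_distrib_right by (intro sum.cong refl arg_cong2[where f="(+)"]) auto
    also have "\<dots> = (\<Sum>k<n. \<Sum>u\<in>B. if flip \<beta> k = u then cf lam v \<beta> k * y u else 0) + (\<Sum>u\<in>B. if u = \<beta> then t * y u else 0)"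
      by (simp add: sum.distrib sum.swap[of _ B])
    also have "\<dots> = (\<Sum>k<n. cf lam v \<beta> k * y0 (flip \<beta> k)) + t * y0 \<beta>"
      using fB by (simp add: y0_def sum.delta sum.delta' if_distrib[of "\<lambda>x. cf lam v \<beta> _ * x"] cong: if_cong)
    finally show ?thesis by (simp add: z_def M_def Mop_def)
  qed
  have zC: "z \<beta> = 0" if "\<beta> \<in> cube n" "\<beta> \<notin> H" for \<beta>
    using y(2) that zsum C_def by auto
  have Mz: "M z \<beta> = t * z \<beta>" if "\<beta> \<in> cube n" for \<beta>
  proof -
    have len: "length \<beta> = n" using that by (simp add: cube_def)
    have zf: "z = (\<lambda>a. M y0 a + t * y0 a)" by (simp add: z_def fun_eq_iff)
    have e1: "M z \<beta> = M (M y0) \<beta> + t * M y0 \<beta>" unfolding zf M_def by (rule Mop_lin)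
    have e2: "M (M y0) \<beta> = s * y0 \<beta>" unfolding M_def s_def by (rule Mop_sq[OF len])
    have "t * z \<beta> = t * M y0 \<beta> + (t * t) * y0 \<beta>" by (simp add: z_def algebra_simps)
    then show ?thesis using e1 e2 tt by simp
  qed
  obtain u where u: "u \<in> B" "y u \<noteq> 0" using y(1) by auto
  define \<beta>1 where "\<beta>1 = flip u j"
  have ulen: "length u = n" "\<not> u ! j" using u B_def cube_def by auto
  have b1c: "\<beta>1 \<in> cube n" using ulen by (simp add: \<beta>1_def cube_def)
  have b1j: "\<beta>1 ! j" using ulen j by (simp add: \<beta>1_def)
  have "z \<beta>1 = cf lam v \<beta>1 j * y u"
  proof -
    have "z \<beta>1 = (\<Sum>k<n. if k = j then cf lam v \<beta>1 j * y u else 0)"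
      unfolding z_def M_def Mop_def
    proof -
      have "y0 \<beta>1 = 0" using b1j by (simp add: y0_def B_def)
      moreover have "cf lam v \<beta>1 k * y0 (flip \<beta>1 k) = (if k = j then cf lam v \<beta>1 j * y u else 0)" if "k < n" for k
      proof (cases "k = j")
        case True
        then show ?thesis using ulen j u(1) by (simp add: \<beta>1_def y0_def)
      next
        case False
        then have "flip \<beta>1 k ! j" using b1j by simp
        then show ?thesis using False by (simp add: y0_def B_def)
      qed
      ultimately show "(\<Sum>k<n. cf lam v \<beta>1 k * y0 (flip \<beta>1 k)) + t * y0 \<beta>1 = (\<Sum>k<n. if k = j then cf lam v \<beta>1 j * y u else 0)"
        by simp
    qed
    then show ?thesis using j by simp
  qed
  moreover have "cf lam v \<beta>1 j \<noteq> 0" using b1j j by (simp add: cf_def sg_def)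
  ultimately have zb1: "z \<beta>1 \<noteq> 0" using u by simp
  then have b1H: "\<beta>1 \<in> H" using zC b1c by blast
  define m where "m = Max ((\<lambda>x. \<bar>z x\<bar>) ` H)"
  have Hne: "H \<noteq> {}" using b1H by auto
  obtain \<beta> where b: "\<beta> \<in> H" "\<bar>z \<beta>\<bar> = m"
  proof -
    have "m \<in> (\<lambda>x. \<bar>z x\<bar>) ` H" unfolding m_def using fH Hne by (intro Max_in) auto
    then show ?thesis using that by auto
  qed
  have mge: "\<bar>z \<gamma>\<bar> \<le> m" if "\<gamma> \<in> H" for \<gamma>
    unfolding m_def using fH that by (intro Max_ge) auto
  have m0: "m > 0" using mge[OF b1H] zb1 by simp
  have bc: "\<beta> \<in> cube n" and blen: "length \<beta> = n" using b assms(3) by (auto simp: cube_def)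
  define L where "L = sup_norm n lam"
  define V where "V = sup_norm n v"
  have trm: "\<bar>cf lam v \<beta> k * z (flip \<beta> k)\<bar> \<le> m * (if flip \<beta> k \<in> H then (if \<beta> ! k then L else V) else 0)"
    if "k < n" for k
  proof (cases "flip \<beta> k \<in> H")
    case True
    have "\<bar>cf lam v \<beta> k\<bar> \<le> (if \<beta> ! k then L else V)"
      using sup_norm_ge[OF that, of lam] sup_norm_ge[OF that, of v]
      by (simp add: cf_def sg_def abs_mult L_def V_def)
    moreover have "\<bar>z (flip \<beta> k)\<bar> \<le> m" using mge True by blast
    ultimately have "\<bar>cf lam v \<beta> k\<bar> * \<bar>z (flip \<beta> k)\<bar> \<le> (if \<beta> ! k then L else V) * m"
      by (intro mult_mono) auto
    then show ?thesis using True by (simp add: abs_mult mult.commute)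
  next
    case False
    have "flip \<beta> k \<in> cube n" using blen by (simp add: cube_def)
    then show ?thesis using False zC by simp
  qed
  have "t * m = \<bar>M z \<beta>\<bar>" using Mz[OF bc] b t0 by (simp add: abs_mult)
  also have "\<dots> \<le> (\<Sum>k<n. \<bar>cf lam v \<beta> k * z (flip \<beta> k)\<bar>)" unfolding M_def Mop_def by (rule sum_abs)
  also have "\<dots> \<le> (\<Sum>k<n. m * (if flip \<beta> k \<in> H then (if \<beta> ! k then L else V) else 0))"
    by (rule sum_mono) (simp add: trm)
  also have "\<dots> = m * (L * real (card {k. k < n \<and> flip \<beta> k \<in> H \<and> \<beta> ! k}) + V * real (card {k. k < n \<and> flip \<beta> k \<in> H \<and> \<not> \<beta> ! k}))"
    by (simp add: sum_distrib_left[symmetric] sum_ifs_card)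
  finally have "t \<le> L * real (card {k. k < n \<and> flip \<beta> k \<in> H \<and> \<beta> ! k}) + V * real (card {k. k < n \<and> flip \<beta> k \<in> H \<and> \<not> \<beta> ! k})"
    using m0 by (simp add: mult.commute)
  then show ?thesis using b(1) card_up_in[OF blen, of H] card_down_in[OF blen, of H]
    by (auto simp: t_def s_def L_def V_def)
qed

end
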